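(* Let $p\in[1,\infty)$, $s>1+\frac1p$, and let $u_0$ be the function defined below. Set $\lambda_n=\frac{11}{8}2^n$ and $t_n=\frac{8}{11}\pi n2^{-n}$. Then there is a constant $C$ such that for all sufficiently large $n\in\mathbb{N}^+$ and all $t\in[0,1]$, $$\|\phi(x-tu_0(x))\|_{L^p(\mathbb{R})}\le C,\qquad \|\cos(\lambda_n(x-t_nu_0(x)))\|_{L^p([0,2\pi])}\ge\frac14 .$$
   Context: Let $\widehat\phi\in C_c^\infty(\mathbb{R})$ be even, real-valued, with values in $[0,1]$, $\widehat\phi(\xi)=1$ for $|\xi|\le1/4$ and $\widehat\phi(\xi)=0$ for $|\xi|\ge1/2$, and let $\phi$ be the real-valued Schwartz function whose Fourier transform is a positive constant multiple of $\widehat\phi$ (so $\|\phi\|_{L^\infty}=\phi(0)>0$). Let $\gamma(s)=2^{2s}(2^s-1)$, $\tilde\phi(x)=\gamma(s)\phi(x)/\phi(0)$, and $$u_0(x)=\sum_{j=3}^\infty2^{-js}\tilde\phi(x)\cos\Big(\tfrac{11}{8}2^jx\Big),\qquad x\in\mathbb{R}.$$ *)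

theory Defs
  imports "HOL-Analysis.Analysis"
begin

definition smooth_R :: "(real \<Rightarrow> real) \<Rightarrow> bool" where
  "smooth_R f \<longleftrightarrow> (\<forall>k x. ((deriv ^^ k) f) differentiable (at x))"

definition admissible_bump :: "(real \<Rightarrow> real) \<Rightarrow> bool" where
  "admissible_bump ph \<longleftrightarrow> smooth_R ph \<and> (\<forall>\<xi>. ph (-\<xi>) = ph \<xi>)
     \<and> (\<forall>\<xi>. 0 \<le> ph \<xi> \<and> ph \<xi> \<le> 1)
     \<and> (\<forall>\<xi>. \<bar>\<xi>\<bar> \<le> 1/4 \<longrightarrow> ph \<xi> = 1)
     \<and> (\<forall>\<xi>. \<bar>\<xi>\<bar> \<ge> 1/2 \<longrightarrow> ph \<xi> = 0)"

text \<open>The function phi whose Fourier transform (convention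
  hat f(xi) = int f(x) e^{-i x xi} dx) is a positive multiple of ph:
  phi(x) = c * int ph(xi) e^{i x xi} dxi = c * int ph(xi) cos(x xi) dxi (ph even).\<close>
definition phi_of :: "real \<Rightarrow> (real \<Rightarrow> real) \<Rightarrow> real \<Rightarrow> real" where
  "phi_of c ph x = c * (\<integral>\<xi>. ph \<xi> * cos (\<xi> * x) \<partial>lborel)"

definition gamma_s :: "real \<Rightarrow> real" where
  "gamma_s s = 2 powr (2 * s) * (2 powr s - 1)"

definition u0_of :: "real \<Rightarrow> (real \<Rightarrow> real) \<Rightarrow> real \<Rightarrow> real" where
  "u0_of s phi x =
     (\<Sum>j. 2 powr (- real (j + 3) * s) * (gamma_s s * phi x / phi 0)
            * cos (11 / 8 * 2 ^ (j + 3) * x))"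

definition Lp_norm :: "real measure \<Rightarrow> real \<Rightarrow> (real \<Rightarrow> real) \<Rightarrow> ereal" where
  "Lp_norm M p f =
     (let I = (\<integral>\<^sup>+ x. ennreal (\<bar>f x\<bar> powr p) \<partial>M)
      in if I = \<infinity> then \<infinity> else ereal (enn2real I powr (1 / p)))"

end

theory Submission
  imports Defs "HOL-Probability.Sinc_Integral" "HOL-Real_Asymp.Real_Asymp"
begin


lemma cos_lip: "\<bar>cos a - cos b\<bar> \<le> \<bar>a - b::real\<bar>"
proof -
  have "\<bar>cos a - cos b\<bar> = 2 * \<bar>sin ((a + b) / 2)\<bar> * \<bar>sin ((b - a) / 2)\<bar>"
    by (simp add: cos_diff_cos abs_mult)
  also have "\<dots> \<le> 2 * 1 * \<bar>(b - a) / 2\<bar>"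
    by (intro mult_mono abs_sin_x_le_abs_x) auto
  finally show ?thesis by simp
qed

lemma bump_facts:
  assumes "admissible_bump ph"
  shows "\<And>x. 0 \<le> ph x" "\<And>x. ph x \<le> 1" "\<And>x. \<bar>x\<bar> \<le> 1/4 \<Longrightarrow> ph x = 1"
    "\<And>x. \<bar>x\<bar> \<ge> 1/2 \<Longrightarrow> ph x = 0" "\<And>k x. ((deriv ^^ k) ph) differentiable (at x)"
  using assms unfolding admissible_bump_def smooth_R_def by auto

lemma bump_cont:
  assumes "admissible_bump ph"
  shows "continuous_on UNIV ph" "ph \<in> borel_measurable borel"
proof -
  have "ph differentiable (at x)" for x using bump_facts(5)[OF assms, of 0] by simp
  then show c: "continuous_on UNIV ph"
    by (simp add: continuous_at_imp_continuous_on differentiable_imp_continuous_within)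
  then show "ph \<in> borel_measurable borel" by (rule borel_measurable_continuous_onI)
qed

lemma bump_le_ind:
  assumes "admissible_bump ph"
  shows "ph x \<le> indicator {-1/2..1/2} x"
  using bump_facts[OF assms] by (cases "\<bar>x\<bar> \<ge> 1/2") (auto simp: indicator_def)

lemma int_ind: "integrable lborel (indicator {-1/2..1/2::real} :: real \<Rightarrow> real)"
  by (rule integrable_real_indicator) auto

lemma int_ind4: "integrable lborel (indicator {-1/4..1/4::real} :: real \<Rightarrow> real)"
  by (rule integrable_real_indicator) (auto, use top.not_eq_extremum in fastforce)

lemma bump_integrable:
  assumes "admissible_bump ph" and "g \<in> borel_measurable borel" and "\<And>x. \<bar>g x\<bar> \<le> 1"
  shows "integrable lborel (\<lambda>\<xi>. ph \<xi> * g \<xi>)"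
proof (rule Bochner_Integration.integrable_bound[OF int_ind])
  show "(\<lambda>\<xi>. ph \<xi> * g \<xi>) \<in> borel_measurable lborel"
    using bump_cont(2)[OF assms(1)] assms(2) by measurable
  show "AE x in lborel. norm (ph x * g x) \<le> norm (indicator {-1/2..1/2::real} x :: real)"
  proof (intro AE_I2)
    fix x
    have "\<bar>ph x * g x\<bar> = ph x * \<bar>g x\<bar>" using bump_facts(1)[OF assms(1), of x] by (simp add: abs_mult)
    also have "\<dots> \<le> ph x * 1" using bump_facts(1)[OF assms(1), of x] assms(3)[of x]
      by (intro mult_left_mono) auto
    finally have "\<bar>ph x * g x\<bar> \<le> ph x * 1" .
    also have "\<dots> \<le> indicator {-1/2..1/2::real} x" using bump_le_ind[OF assms(1)] by simp
    finally show "norm (ph x * g x) \<le> norm (indicator {-1/2..1/2::real} x :: real)" by simp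
  qed
qed

lemma bump_int_pos:
  assumes "admissible_bump ph"
  shows "integral\<^sup>L lborel ph \<ge> 1/2"
proof -
  have i: "integrable lborel ph" using bump_integrable[OF assms, of "\<lambda>_. 1"] by simp
  have "integral\<^sup>L lborel (indicator {-1/4..1/4::real} :: real \<Rightarrow> real) \<le> integral\<^sup>L lborel ph"
    by (rule integral_mono[OF int_ind4 i]) (auto simp: indicator_def bump_facts[OF assms])
  then show ?thesis by simp
qed

lemma bump_abs_le:
  fixes ph :: "real \<Rightarrow> real"
  assumes "admissible_bump ph"
  shows "ph x * \<bar>x\<bar> \<le> ph x"
  using bump_facts(1,2,4)[OF assms, of x]
  by (cases "\<bar>x\<bar> \<ge> 1/2") (auto intro: mult_left_le)

lemma phi_facts:
  assumes adm: "admissible_bump ph" and c: "c > 0"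
  shows "phi_of c ph 0 > 0" "\<And>x. \<bar>phi_of c ph x\<bar> \<le> phi_of c ph 0"
    "\<And>x y. \<bar>phi_of c ph x - phi_of c ph y\<bar> \<le> phi_of c ph 0 * \<bar>x - y\<bar>"
proof -
  have i: "integrable lborel ph" using bump_integrable[OF adm, of "\<lambda>_. 1"] by simp
  have ic: "integrable lborel (\<lambda>\<xi>. ph \<xi> * cos (\<xi> * x))" for x
    by (rule bump_integrable[OF adm]) auto
  have p0: "phi_of c ph 0 = c * integral\<^sup>L lborel ph" by (simp add: phi_of_def)
  show "phi_of c ph 0 > 0" using bump_int_pos[OF adm] c p0 by simp
  show "\<bar>phi_of c ph x\<bar> \<le> phi_of c ph 0" for x
  proof -
    have "\<bar>integral\<^sup>L lborel (\<lambda>\<xi>. ph \<xi> * cos (\<xi> * x))\<bar> \<le> integral\<^sup>L lborel (\<lambda>\<xi>. norm (ph \<xi> * cos (\<xi> * x)))"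
      using integral_norm_bound[of lborel "\<lambda>\<xi>. ph \<xi> * cos (\<xi> * x)"] by simp
    also have "\<dots> \<le> integral\<^sup>L lborel ph"
    proof (rule integral_mono[OF _ i])
      show "integrable lborel (\<lambda>\<xi>. norm (ph \<xi> * cos (\<xi> * x)))" using ic by auto
      fix t show "norm (ph t * cos (t * x)) \<le> ph t"
        using bump_facts(1)[OF adm, of t] abs_cos_le_one[of "t*x"]
        by (simp add: abs_mult mult_left_le)
    qed
    finally show ?thesis using c p0 by (simp add: phi_of_def abs_mult)
  qed
  show "\<bar>phi_of c ph x - phi_of c ph y\<bar> \<le> phi_of c ph 0 * \<bar>x - y\<bar>" for x y
  proof -
    have "phi_of c ph x - phi_of c ph y = c * integral\<^sup>L lborel (\<lambda>\<xi>. ph \<xi> * cos (\<xi> * x) - ph \<xi> * cos (\<xi> * y))"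
      using ic[of x] ic[of y] by (simp add: phi_of_def algebra_simps)
    moreover {
    have "\<bar>integral\<^sup>L lborel (\<lambda>\<xi>. ph \<xi> * cos (\<xi> * x) - ph \<xi> * cos (\<xi> * y))\<bar> \<le> integral\<^sup>L lborel (\<lambda>\<xi>. norm (ph \<xi> * cos (\<xi> * x) - ph \<xi> * cos (\<xi> * y)))"
      using integral_norm_bound[of lborel "\<lambda>\<xi>. ph \<xi> * cos (\<xi> * x) - ph \<xi> * cos (\<xi> * y)"] by simp
    also have "\<dots> \<le> integral\<^sup>L lborel (\<lambda>\<xi>. ph \<xi> * \<bar>x - y\<bar>)"
    proof (rule integral_mono)
      show "integrable lborel (\<lambda>\<xi>. norm (ph \<xi> * cos (\<xi> * x) - ph \<xi> * cos (\<xi> * y)))" using ic by auto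
      show "integrable lborel (\<lambda>\<xi>. ph \<xi> * \<bar>x - y\<bar>)" using i by auto
      fix t
      have "norm (ph t * cos (t * x) - ph t * cos (t * y)) = ph t * \<bar>cos (t * x) - cos (t * y)\<bar>"
        using bump_facts(1)[OF adm, of t] by (simp add: abs_mult right_diff_distrib[symmetric])
      also have "\<dots> \<le> ph t * (\<bar>t\<bar> * \<bar>x - y\<bar>)"
        using bump_facts(1)[OF adm, of t] cos_lip[of "t*x" "t*y"]
        by (intro mult_left_mono) (auto simp: abs_mult right_diff_distrib[symmetric])
      also have "\<dots> = (ph t * \<bar>t\<bar>) * \<bar>x - y\<bar>" by simp
      also have "\<dots> \<le> ph t * \<bar>x - y\<bar>" using bump_abs_le[OF adm, of t]
        by (intro mult_right_mono) auto
      finally show "norm (ph t * cos (t * x) - ph t * cos (t * y)) \<le> ph t * \<bar>x - y\<bar>" .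
    qed
    also have "\<dots> = integral\<^sup>L lborel ph * \<bar>x - y\<bar>" by simp
    finally have "\<bar>integral\<^sup>L lborel (\<lambda>\<xi>. ph \<xi> * cos (\<xi> * x) - ph \<xi> * cos (\<xi> * y))\<bar> \<le> integral\<^sup>L lborel ph * \<bar>x - y\<bar>" . }
    ultimately show ?thesis using c p0 by (simp add: abs_mult mult_left_mono)
  qed
qed

lemma bump_int_decay:
  fixes ph :: "real \<Rightarrow> real"
  assumes adm: "admissible_bump ph"
  shows "\<exists>B\<ge>0. \<forall>y. y \<noteq> 0 \<longrightarrow> \<bar>integral\<^sup>L lborel (\<lambda>\<xi>. ph \<xi> * cos (\<xi> * y))\<bar> \<le> B / y\<^sup>2"
proof -
  define D where "D = deriv ph"
  define D2 where "D2 = deriv D"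
  have dph: "(ph has_real_derivative D x) (at x)" for x
    using bump_facts(5)[OF adm, of 0 x] by (simp add: D_def DERIV_deriv_iff_real_differentiable)
  have dD: "(D has_real_derivative D2 x) (at x)" for x
    using bump_facts(5)[OF adm, of 1 x] by (simp add: D_def D2_def DERIV_deriv_iff_real_differentiable)
  have cD2: "continuous_on UNIV D2"
  proof -
    have "D2 differentiable (at x)" for x
      using bump_facts(5)[OF adm, of 2 x] by (simp add: D_def D2_def numeral_2_eq_2)
    then show ?thesis
      by (simp add: continuous_at_imp_continuous_on differentiable_imp_continuous_within)
  qed
  have D0: "D x = 0" if "\<bar>x\<bar> = 1" for x
  proof -
    have "((\<lambda>_. 0) has_real_derivative 0) (at x)" by simp
    then have "(ph has_real_derivative 0) (at x)"
    proof (rule has_field_derivative_transform_within_open)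
      show "open {t::real. \<bar>t\<bar> > 1/2}" by (rule open_Collect_less) (auto intro!: continuous_intros)
      show "x \<in> {t::real. \<bar>t\<bar> > 1/2}" using that by simp
      show "\<And>t. t \<in> {t::real. \<bar>t\<bar> > 1/2} \<Longrightarrow> 0 = ph t" using bump_facts(4)[OF adm] by force
    qed
    then show ?thesis using dph[of x] DERIV_unique by blast
  qed
  have ph1: "ph x = 0" if "\<bar>x\<bar> = 1" for x using bump_facts(4)[OF adm, of x] that by simp
  obtain B0 where B0: "\<And>x. x \<in> {-1..1} \<Longrightarrow> norm (D2 x) \<le> B0"
    using compact_imp_bounded[OF compact_continuous_image[OF continuous_on_subset[OF cD2] compact_Icc, of "-1" 1, OF subset_UNIV]]
    unfolding bounded_iff by (metis image_eqI)
  define B where "B = max B0 0"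
  have B: "\<And>x. x \<in> {-1..1} \<Longrightarrow> norm (D2 x) \<le> B" "B \<ge> 0" using B0 by (force simp: B_def)+
  show ?thesis
  proof (intro exI[of _ "2 * B"] conjI allI impI)
    show "0 \<le> 2 * B" using B by simp
    fix y :: real assume y: "y \<noteq> 0"
    define F where "F \<xi> = ph \<xi> * sin (\<xi> * y) / y + D \<xi> * cos (\<xi> * y) / y\<^sup>2" for \<xi>
    have "((\<lambda>\<xi>. ph \<xi> * cos (\<xi> * y) + D2 \<xi> * cos (\<xi> * y) / y\<^sup>2) has_integral (F 1 - F (-1))) {-1..1}"
    proof (rule fundamental_theorem_of_calculus)
      fix x :: real
      have "(F has_real_derivative (ph x * cos (x * y) + D2 x * cos (x * y) / y\<^sup>2)) (at x)"
      proof -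
        have d1: "((\<lambda>\<xi>. ph \<xi> * sin (\<xi> * y)) has_real_derivative (D x * sin (x*y) + ph x * (cos (x*y) * y))) (at x)"
          by (auto intro!: derivative_eq_intros dph)
        have d2: "((\<lambda>\<xi>. D \<xi> * cos (\<xi> * y)) has_real_derivative (D2 x * cos (x*y) - D x * (sin (x*y) * y))) (at x)"
          by (auto intro!: derivative_eq_intros dD)
        have "(F has_real_derivative ((D x * sin (x*y) + ph x * (cos (x*y) * y)) / y + (D2 x * cos (x*y) - D x * (sin (x*y) * y)) / y\<^sup>2)) (at x)"
          unfolding F_def by (intro DERIV_add DERIV_cdivide d1 d2)
        moreover have "(D x * sin (x*y) + ph x * (cos (x*y) * y)) / y + (D2 x * cos (x*y) - D x * (sin (x*y) * y)) / y\<^sup>2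
            = ph x * cos (x * y) + D2 x * cos (x * y) / y\<^sup>2"
          using y by (simp add: field_simps power2_eq_square)
        ultimately show ?thesis by simp
      qed
      then show "(F has_vector_derivative (ph x * cos (x * y) + D2 x * cos (x * y) / y\<^sup>2)) (at x within {-1..1})"
        by (simp add: has_real_derivative_iff_has_vector_derivative has_vector_derivative_at_within)
    qed simp
    moreover have "F 1 = 0" "F (-1) = 0" using D0[of 1] D0[of "-1"] ph1[of 1] ph1[of "-1"] by (auto simp: F_def)
    ultimately have h1: "((\<lambda>\<xi>. ph \<xi> * cos (\<xi> * y) + D2 \<xi> * cos (\<xi> * y) / y\<^sup>2) has_integral 0) {-1..1}" by simp
    let ?I = "integral\<^sup>L lborel (\<lambda>\<xi>. ph \<xi> * cos (\<xi> * y))"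
    have iU: "((\<lambda>\<xi>. ph \<xi> * cos (\<xi> * y)) has_integral ?I) UNIV"
      by (rule has_integral_integral_lborel, rule bump_integrable[OF adm]) auto
    have "((\<lambda>\<xi>. if \<xi> \<in> {-1..1} then ph \<xi> * cos (\<xi> * y) else 0) has_integral ?I) UNIV"
      by (rule has_integral_eq[OF _ iU]) (use bump_facts(4)[OF adm] in auto)
    then have h2: "((\<lambda>\<xi>. ph \<xi> * cos (\<xi> * y)) has_integral ?I) {-1..1}"
      by (subst has_integral_restrict_UNIV[symmetric]) simp
    have h3: "((\<lambda>\<xi>. D2 \<xi> * cos (\<xi> * y) / y\<^sup>2) has_integral (0 - ?I)) {-1..1}"
      using has_integral_diff[OF h1 h2] by simp
    have h4: "((\<lambda>\<xi>. D2 \<xi> * cos (\<xi> * y)) has_integral (- ?I * y\<^sup>2)) {-1..1}"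
      using has_integral_mult_left[OF h3, of "y\<^sup>2"] y by (simp add: field_simps)
    have "norm (- ?I * y\<^sup>2) \<le> B * Henstock_Kurzweil_Integration.content (cbox (-1) (1::real))"
    proof (rule has_integral_bound[OF B(2)])
      show "((\<lambda>\<xi>. D2 \<xi> * cos (\<xi> * y)) has_integral (- ?I * y\<^sup>2)) (cbox (-1) 1)" using h4 by simp
      fix x :: real assume "x \<in> cbox (-1) 1"
      then have "norm (D2 x) \<le> B" using B(1) by simp
      then show "norm (D2 x * cos (x * y)) \<le> B"
      proof -
        have "\<bar>D2 x\<bar> * \<bar>cos (x * y)\<bar> \<le> \<bar>D2 x\<bar> * 1"
          using abs_cos_le_one[of "x*y"] by (intro mult_left_mono) auto
        then show ?thesis using \<open>norm (D2 x) \<le> B\<close> by (simp add: abs_mult)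
      qed
    qed
    then have "\<bar>?I\<bar> * y\<^sup>2 \<le> 2 * B" by (simp add: abs_mult)
    then show "\<bar>?I\<bar> \<le> 2 * B / y\<^sup>2" using y by (simp add: field_simps)
  qed
qed

lemma phi_decay:
  assumes adm: "admissible_bump ph" and c: "c > 0"
  shows "\<exists>A\<ge>0. \<forall>y. \<bar>phi_of c ph y\<bar> \<le> A / (1 + y\<^sup>2)"
proof -
  obtain B where B: "B \<ge> 0" "\<And>y. y \<noteq> 0 \<Longrightarrow> \<bar>integral\<^sup>L lborel (\<lambda>\<xi>. ph \<xi> * cos (\<xi> * y))\<bar> \<le> B / y\<^sup>2"
    using bump_int_decay[OF adm] by blast
  define P where "P = phi_of c ph 0"
  have P: "P > 0" "\<And>y. \<bar>phi_of c ph y\<bar> \<le> P" using phi_facts[OF adm c] by (auto simp: P_def)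
  show ?thesis
  proof (intro exI[of _ "2 * P + 2 * c * B"] conjI allI)
    show "0 \<le> 2 * P + 2 * c * B" using P B c by simp
    fix y :: real
    have pos: "1 + y\<^sup>2 > 0" by (simp add: add_pos_nonneg)
    show "\<bar>phi_of c ph y\<bar> \<le> (2 * P + 2 * c * B) / (1 + y\<^sup>2)"
    proof (cases "y\<^sup>2 \<le> 1")
      case True
      have "P * y\<^sup>2 \<le> P * 1" using True P by (intro mult_left_mono) auto
      moreover have "P * (1 + y\<^sup>2) = P + P * y\<^sup>2" by (simp add: algebra_simps)
      moreover have "c * B \<ge> 0" using B c by simp
      ultimately have "P * (1 + y\<^sup>2) \<le> 2 * P + 2 * c * B" by linarith
      then have "P \<le> (2 * P + 2 * c * B) / (1 + y\<^sup>2)" using pos by (simp add: field_simps)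
      then show ?thesis using P(2)[of y] by linarith
    next
      case False
      then have y: "y \<noteq> 0" by auto
      have "\<bar>phi_of c ph y\<bar> = c * \<bar>integral\<^sup>L lborel (\<lambda>\<xi>. ph \<xi> * cos (\<xi> * y))\<bar>"
        using c by (simp add: phi_of_def abs_mult)
      also have "\<dots> \<le> c * (B / y\<^sup>2)" using B(2)[OF y] c by (intro mult_left_mono) auto
      also have "\<dots> \<le> (2 * c * B) / (1 + y\<^sup>2)"
      proof -
        have "c * B * (1 + y\<^sup>2) \<le> 2 * c * B * y\<^sup>2" using False c B
          by (simp add: algebra_simps mult_left_mono)
        then show ?thesis using pos y by (simp add: field_simps)
      qed
      also have "\<dots> \<le> (2 * P + 2 * c * B) / (1 + y\<^sup>2)" using pos P by (intro divide_right_mono) auto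
      finally show ?thesis .
    qed
  qed
qed

lemma sum_bound:
  fixes f b :: "nat \<Rightarrow> real"
  assumes "summable b" "\<And>j. \<bar>f j\<bar> \<le> b j"
  shows "summable f" "\<bar>suminf f\<bar> \<le> suminf b"
proof -
  have sa: "summable (\<lambda>j. \<bar>f j\<bar>)"
    by (rule summable_comparison_test[OF _ assms(1)]) (use assms(2) in auto)
  then show "summable f" by (rule summable_rabs_cancel)
  have "\<bar>suminf f\<bar> \<le> (\<Sum>j. \<bar>f j\<bar>)" by (rule summable_rabs[OF sa])
  also have "\<dots> \<le> suminf b" by (rule suminf_le[OF assms(2) sa assms(1)])
  finally show "\<bar>suminf f\<bar> \<le> suminf b" .
qed


lemma summable_w:
  fixes s r :: real
  assumes "r < s"
  shows "summable (\<lambda>j::nat. 2 powr (- real (j + 3) * s) * 2 powr (real (j+3) * r))"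
proof -
  have eq: "2 powr (- real (j + 3) * s) * 2 powr (real (j+3) * r) = 2 powr (3 * (r - s)) * (2 powr (r - s)) ^ j" for j
    by (simp add: powr_add[symmetric] powr_realpow[symmetric] powr_powr algebra_simps)
  have "2 powr (r - s) < 1" using assms by (simp add: powr_less_one)
  then have "summable (\<lambda>j::nat. (2 powr (r - s)) ^ j)" by (intro summable_geometric) simp
  then show ?thesis unfolding eq by (rule summable_mult)
qed

lemma gamma_pos: "s > 0 \<Longrightarrow> gamma_s s > 0"
  unfolding gamma_s_def by (simp add: powr_less_one)

lemma u0_facts:
  fixes phi :: "real \<Rightarrow> real" and s :: real
  assumes s: "s > 1" and P: "phi 0 > 0" and pb: "\<And>x. \<bar>phi x\<bar> \<le> phi 0"
    and pl: "\<And>x y. \<bar>phi x - phi y\<bar> \<le> phi 0 * \<bar>x - y\<bar>"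
  shows "\<exists>M. \<forall>x. \<bar>u0_of s phi x\<bar> \<le> M"
    "\<exists>L\<ge>0. \<forall>x y. \<bar>u0_of s phi x - u0_of s phi y\<bar> \<le> L * \<bar>x - y\<bar>"
proof -
  define g where "g = gamma_s s"
  have g: "g > 0" using gamma_pos[of s] s by (simp add: g_def)
  define w where "w j = 2 powr (- real (j + 3) * s)" for j :: nat
  have w: "w j > 0" for j by (simp add: w_def)
  have sw: "summable w" using summable_w[of 0 s] s unfolding w_def[abs_def] by simp
  have sw2: "summable (\<lambda>j. w j * 2 powr (real (j+3) * 1))" using summable_w[of 1 s] s unfolding w_def[abs_def] by simp
  define T where "T j x = w j * (g * phi x / phi 0) * cos (11 / 8 * 2 ^ (j + 3) * x)" for j x
  have u0: "u0_of s phi x = suminf (\<lambda>j. T j x)" for x by (simp add: u0_of_def T_def w_def g_def)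
  have Tb: "\<bar>T j x\<bar> \<le> w j * g" for j x
  proof -
    have "\<bar>T j x\<bar> = w j * g * (\<bar>phi x\<bar> / phi 0) * \<bar>cos (11 / 8 * 2 ^ (j + 3) * x)\<bar>"
      using w[of j] g P by (simp add: T_def abs_mult)
    also have "\<dots> \<le> w j * g * 1 * 1" using w[of j] g P pb[of x]
      by (intro mult_mono) auto
    finally show ?thesis by simp
  qed
  have sT: "summable (\<lambda>j. T j x)" for x by (rule sum_bound(1)[OF summable_mult2[OF sw] Tb])
  show "\<exists>M. \<forall>x. \<bar>u0_of s phi x\<bar> \<le> M"
  proof (intro exI allI)
    fix x show "\<bar>u0_of s phi x\<bar> \<le> (\<Sum>j. w j * g)"
      using sum_bound(2)[OF summable_mult2[OF sw], of "\<lambda>j. T j x"] Tb unfolding u0 by blast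
  qed
  define Lj where "Lj j = g * (w j + 11 / 8 * (w j * 2 powr (real (j+3) * 1)))" for j
  have sL: "summable Lj" unfolding Lj_def
    by (intro summable_mult summable_add sw sw2)
  have Lj0: "Lj j \<ge> 0" for j using w[of j] g by (simp add: Lj_def)
  have Td: "\<bar>T j x - T j y\<bar> \<le> Lj j * \<bar>x - y\<bar>" for j x y
  proof -
    define a :: real where "a = 11 / 8 * 2 ^ (j + 3)"
    have a: "a > 0" by (simp add: a_def)
    have aeq: "a = 11 / 8 * 2 powr (real (j+3) * 1)"
      unfolding a_def by (simp only: mult_1_right powr_realpow)
    have "T j x - T j y = w j * g / phi 0 * (phi x * cos (a * x) - phi y * cos (a * y))"
      by (simp add: T_def a_def algebra_simps)
    moreover have "\<bar>phi x * cos (a * x) - phi y * cos (a * y)\<bar> \<le> phi 0 * \<bar>x - y\<bar> + phi 0 * (a * \<bar>x - y\<bar>)"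
    proof -
      have "phi x * cos (a * x) - phi y * cos (a * y) = (phi x - phi y) * cos (a * x) + phi y * (cos (a * x) - cos (a * y))"
        by (simp add: algebra_simps)
      also have "\<bar>\<dots>\<bar> \<le> \<bar>phi x - phi y\<bar> * \<bar>cos (a * x)\<bar> + \<bar>phi y\<bar> * \<bar>cos (a * x) - cos (a * y)\<bar>"
        by (simp add: abs_mult[symmetric] abs_triangle_ineq)
      also have "\<dots> \<le> phi 0 * \<bar>x - y\<bar> * 1 + phi 0 * (a * \<bar>x - y\<bar>)"
      proof (intro add_mono mult_mono)
        show "\<bar>cos (a * x) - cos (a * y)\<bar> \<le> a * \<bar>x - y\<bar>"
          using cos_lip[of "a*x" "a*y"] a by (simp add: abs_mult right_diff_distrib[symmetric])
      qed (use pl pb P a in auto)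
      finally show ?thesis by simp
    qed
    ultimately have "\<bar>T j x - T j y\<bar> \<le> w j * g / phi 0 * (phi 0 * \<bar>x - y\<bar> + phi 0 * (a * \<bar>x - y\<bar>))"
      using w[of j] g P by (simp add: abs_mult mult_left_mono divide_right_mono)
    also have "\<dots> = Lj j * \<bar>x - y\<bar>" using P by (simp add: Lj_def aeq field_simps)
    finally show ?thesis .
  qed
  show "\<exists>L\<ge>0. \<forall>x y. \<bar>u0_of s phi x - u0_of s phi y\<bar> \<le> L * \<bar>x - y\<bar>"
  proof (intro exI[of _ "suminf Lj"] conjI allI)
    show "0 \<le> suminf Lj" using Lj0 sL by (simp add: suminf_nonneg)
    fix x y
    have "u0_of s phi x - u0_of s phi y = suminf (\<lambda>j. T j x - T j y)"
      unfolding u0 using suminf_diff[OF sT sT] by simp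
    also have "\<bar>\<dots>\<bar> \<le> suminf (\<lambda>j. Lj j * \<bar>x - y\<bar>)"
      by (rule sum_bound(2)[OF summable_mult2[OF sL] Td])
    also have "\<dots> = suminf Lj * \<bar>x - y\<bar>" using suminf_mult2[OF sL] by simp
    finally show "\<bar>u0_of s phi x - u0_of s phi y\<bar> \<le> suminf Lj * \<bar>x - y\<bar>" .
  qed
qed

lemma osc_bound:
  fixes psi :: "real \<Rightarrow> real" and lam K :: real
  assumes lam: "lam > 0" and cont: "continuous_on UNIV psi" and K: "K \<ge> 0"
    and lip: "\<And>x y. \<bar>psi x - psi y\<bar> \<le> K * \<bar>x - y\<bar>"
  shows "\<bar>integral {0..2*pi} (\<lambda>x. cos (2 * lam * x - psi x))\<bar> \<le> pi * K * (pi / (2 * lam)) + pi / (2 * lam)"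
proof -
  define d where "d = pi / (2 * lam)"
  have d: "d > 0" using lam by (simp add: d_def)
  define G where "G x = cos (2 * lam * x - psi x)" for x
  have cG: "continuous_on UNIV G" unfolding G_def by (intro continuous_intros cont)
  have cGs: "continuous_on S G" for S using continuous_on_subset[OF cG] by blast
  have iG: "G integrable_on {a..b}" for a b by (rule integrable_continuous_interval[OF cGs])
  have cGd: "continuous_on UNIV (\<lambda>x. G (x + d))"
    by (rule continuous_on_compose2[OF cG]) (auto intro!: continuous_intros)
  have sh: "integral {0..2*pi} (\<lambda>x. G (x + d)) = integral {d..2*pi+d} G"
    using integral_shift_Icc_real[of 0 "2*pi" G d] by (simp add: o_def add.commute)
  have c1: "integral {0..d} G + integral {d..2*pi+d} G = integral {0..2*pi+d} G"
    by (rule Henstock_Kurzweil_Integration.integral_combine) (use d iG in auto)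
  have c2: "integral {0..2*pi} G + integral {2*pi..2*pi+d} G = integral {0..2*pi+d} G"
    by (rule Henstock_Kurzweil_Integration.integral_combine) (use d iG in auto)
  have add: "integral {0..2*pi} (\<lambda>x. G x + G (x + d)) = integral {0..2*pi} G + integral {0..2*pi} (\<lambda>x. G (x + d))"
    by (intro integral_add iG integrable_continuous_interval continuous_on_subset[OF cGd]) auto
  have Hb: "\<bar>G x + G (x + d)\<bar> \<le> K * d" for x
  proof -
    have "G (x + d) = - cos (2 * lam * x - psi (x + d))"
    proof -
      have "G (x + d) = cos ((2 * lam * x - psi (x + d)) + pi)"
        unfolding G_def by (rule arg_cong[where f=cos]) (use lam in \<open>simp add: d_def field_simps\<close>)
      also have "\<dots> = - cos (2 * lam * x - psi (x + d))" by (rule cos_periodic_pi)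
      finally show ?thesis .
    qed
    then have "\<bar>G x + G (x + d)\<bar> = \<bar>cos (2 * lam * x - psi x) - cos (2 * lam * x - psi (x + d))\<bar>"
      by (simp add: G_def)
    also have "\<dots> \<le> \<bar>psi (x + d) - psi x\<bar>" using cos_lip[of "2 * lam * x - psi x" "2 * lam * x - psi (x + d)"] by simp
    also have "\<dots> \<le> K * d" using lip[of "x + d" x] d by simp
    finally show ?thesis .
  qed
  have b1: "\<bar>integral {0..2*pi} (\<lambda>x. G x + G (x + d))\<bar> \<le> K * d * (2 * pi - 0)"
    using integral_bound[of 0 "2*pi" "\<lambda>x. G x + G (x + d)" "K * d"] Hb
    by (auto intro!: continuous_on_subset[OF continuous_on_add[OF cG cGd]])
  have gb: "\<bar>G x\<bar> \<le> 1" for x by (simp add: G_def)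
  have b2: "\<bar>integral {0..d} G\<bar> \<le> 1 * (d - 0)"
    using integral_bound[of 0 d G 1] d gb by (auto intro: cGs)
  have b3: "\<bar>integral {2*pi..2*pi+d} G\<bar> \<le> 1 * (2*pi+d - 2*pi)"
    using integral_bound[of "2*pi" "2*pi+d" G 1] d gb by (auto intro: cGs)
  have "2 * integral {0..2*pi} G = integral {0..2*pi} (\<lambda>x. G x + G (x + d)) + integral {0..d} G - integral {2*pi..2*pi+d} G"
    using add sh c1 c2 by linarith
  moreover have "K * d * (2 * pi - 0) = K * d * (2 * pi)" "1 * (d - 0) = d" "1 * (2*pi+d - 2*pi) = d" by simp_all
  ultimately have "\<bar>2 * integral {0..2*pi} G\<bar> \<le> K * d * (2 * pi) + d + d"
    using b1 b2 b3 by (smt (verit))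
  then have "\<bar>integral {0..2*pi} G\<bar> \<le> pi * K * d + d" by (simp add: abs_mult algebra_simps)
  then show ?thesis by (simp add: G_def[abs_def] d_def)
qed



lemma pow_lower:
  fixes a p :: real
  assumes "0 \<le> a" "a \<le> 1" "p \<ge> 1"
  shows "2 powr (-p) * (4 * a\<^sup>2 - 1) / 3 \<le> a powr p"
proof (cases "a < 1/2")
  case True
  have "a * a < (1/2) * (1/2)" using True assms by (intro mult_strict_mono) auto
  then have "4 * a\<^sup>2 - 1 < 0" by (simp add: power2_eq_square)
  then have "2 powr (-p) * (4 * a\<^sup>2 - 1) / 3 \<le> 0" by (simp add: mult_nonneg_nonpos divide_nonpos_pos)
  then show ?thesis using powr_ge_zero[of a p] by linarith
next
  case False
  then have "(1/2) powr p \<le> a powr p" using assms by (intro powr_mono2) auto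
  moreover have "(1/2::real) powr p = 2 powr (-p)" by (simp only: powr_minus_divide powr_divide[of 1 2] powr_one_gt_zero_iff) simp
  moreover have "a * a \<le> 1 * 1" using assms by (intro mult_mono) auto
  then have "(4 * a\<^sup>2 - 1) / 3 \<le> 1" by (simp add: power2_eq_square)
  moreover have "2 powr (-p) > 0" by simp
  ultimately have "2 powr (-p) * ((4 * a\<^sup>2 - 1) / 3) \<le> 2 powr (-p) * 1"
    by (intro mult_left_mono) auto
  then have "2 powr (-p) * (4 * a\<^sup>2 - 1) / 3 \<le> 2 powr (-p)"
    by (metis mult.right_neutral times_divide_eq_right)
  moreover have "2 powr (-p) \<le> a powr p"
    using \<open>(1/2) powr p \<le> a powr p\<close> \<open>(1/2::real) powr p = 2 powr (-p)\<close> by simp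
  ultimately show ?thesis by (rule order_trans)
qed

lemma lp_lower:
  fixes theta :: "real \<Rightarrow> real" and p :: real
  assumes p: "p \<ge> 1" and ct: "continuous_on UNIV theta"
    and ib: "\<bar>integral {0..2*pi} (\<lambda>x. cos (2 * theta x))\<bar> \<le> pi / 2"
  shows "Lp_norm (restrict_space lborel {0..2 * pi}) p (\<lambda>x. cos (theta x)) \<ge> 1/4"
proof -
  define I where "I = (\<integral>\<^sup>+ x. ennreal (\<bar>cos (theta x)\<bar> powr p) \<partial>restrict_space lborel {0..2 * pi})"
  define g where "g x = max 0 (2 powr (-p) * ((1 + 2 * cos (2 * theta x)) / 3))" for x
  have cg: "continuous_on {0..2*pi} g" unfolding g_def
    by (intro continuous_intros continuous_on_subset[OF ct]) auto
  have gle: "g x \<le> \<bar>cos (theta x)\<bar> powr p" for x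
  proof -
    have "4 * \<bar>cos (theta x)\<bar>\<^sup>2 - 1 = 1 + 2 * cos (2 * theta x)"
      by (simp add: cos_double_cos)
    then show ?thesis using pow_lower[of "\<bar>cos (theta x)\<bar>" p] p
      by (auto simp: g_def)
  qed
  have "I = (\<integral>\<^sup>+ x. ennreal (\<bar>cos (theta x)\<bar> powr p) * indicator {0..2*pi} x \<partial>lborel)"
    unfolding I_def by (rule nn_integral_restrict_space) auto
  also have "\<dots> \<ge> (\<integral>\<^sup>+ x. ennreal (g x) * indicator {0..2*pi} x \<partial>lborel)"
    by (intro nn_integral_mono mult_right_mono) (auto simp: gle)
  finally have I1: "I \<ge> (\<integral>\<^sup>+ x. ennreal (g x) * indicator {0..2*pi} x \<partial>lborel)" .
  have "(\<integral>\<^sup>+ x. ennreal (g x) * indicator {0..2*pi} x \<partial>lborel) = ennreal (integral {0..2*pi} g)"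
  proof (rule nn_integral_has_integral_lebesgue')
    show "0 \<le> g x" for x by (simp add: g_def)
    show "(g has_integral integral {0..2 * pi} g) {0..2 * pi}"
      by (intro integrable_integral integrable_continuous_interval cg)
  qed
  define Ic where "Ic = integral {0..2*pi} (\<lambda>x. cos (2 * theta x))"
  have hc: "((\<lambda>x. cos (2 * theta x)) has_integral Ic) {0..2*pi}" unfolding Ic_def
    by (intro integrable_integral integrable_continuous_interval continuous_intros continuous_on_subset[OF ct]) auto
  have h1: "((\<lambda>x. 1::real) has_integral (2 * pi)) {0..2*pi}"
    using has_integral_const_real[of "1::real" 0 "2*pi"] by simp
  have h2: "((\<lambda>x. 2 powr (-p) * ((1 + 2 * cos (2 * theta x)) / 3)) has_integral (2 powr (-p) * ((2 * pi + 2 * Ic) / 3))) {0..2*pi}"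
    by (intro has_integral_mult_right has_integral_divide has_integral_add h1 has_integral_mult_right hc)
  have "2 powr (-p) * ((2 * pi + 2 * Ic) / 3) \<le> integral {0..2*pi} g"
    by (rule has_integral_le[OF h2 integrable_integral[OF integrable_continuous_interval[OF cg]]]) (auto simp: g_def)
  moreover have "2 powr (-p) \<le> 2 powr (-p) * ((2 * pi + 2 * Ic) / 3)"
  proof -
    have "\<bar>Ic\<bar> \<le> pi/2" using ib by (simp add: Ic_def)
    then have "1 \<le> (2 * pi + 2 * Ic) / 3" using pi_gt3 by (simp add: abs_le_iff)
    then show ?thesis by (simp add: mult_le_cancel_left1)
  qed
  ultimately have "ennreal (2 powr (-p)) \<le> I"
    using I1 \<open>(\<integral>\<^sup>+ x. ennreal (g x) * indicator {0..2*pi} x \<partial>lborel) = ennreal (integral {0..2*pi} g)\<close>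
    by (metis ennreal_leI order_trans)
  show ?thesis
  proof (cases "I = \<infinity>")
    case True then show ?thesis unfolding Lp_norm_def Let_def I_def[symmetric] by simp
  next
    case False
    have "enn2real (ennreal (2 powr (-p))) \<le> enn2real I"
      by (rule enn2real_mono[OF \<open>ennreal (2 powr (-p)) \<le> I\<close>]) (use False in \<open>simp add: top.not_eq_extremum\<close>)
    then have "2 powr (-p) \<le> enn2real I" by simp
    then have "(2 powr (-p)) powr (1/p) \<le> enn2real I powr (1/p)" using p by (intro powr_mono2) auto
    moreover have "(2 powr (-p)) powr (1/p) = 1/2"
    proof -
      have "(2 powr (-p)) powr (1/p) = 2 powr (-p * (1/p))" by (rule powr_powr)
      also have "-p * (1/p) = -1" using p by simp
      finally show ?thesis by (simp add: powr_minus)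
    qed
    ultimately have "1/4 \<le> enn2real I powr (1/p)" by simp
    moreover have e: "(1/4 :: ereal) = ereal (1/4)" by (simp add: one_ereal_def ereal_divide)
    ultimately show ?thesis using False unfolding Lp_norm_def Let_def I_def[symmetric] by simp
  qed
qed

lemma part1:
  fixes ph :: "real \<Rightarrow> real"
  assumes adm: "admissible_bump ph" and c: "c > 0" and p: "p \<ge> 1" and s: "s > 1"
  shows "\<exists>C. \<forall>t\<in>{0..1::real}. Lp_norm lborel p (\<lambda>x. phi_of c ph (x - t * u0_of s (phi_of c ph) x)) \<le> ereal C"
proof -
  define Phi where "Phi = phi_of c ph"
  define P where "P = Phi 0"
  note pf = phi_facts[OF adm c, folded Phi_def, folded P_def]
  obtain A where A: "A \<ge> 0" "\<And>y. \<bar>Phi y\<bar> \<le> A / (1 + y\<^sup>2)"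
    using phi_decay[OF adm c] unfolding Phi_def by blast
  obtain M where M: "\<And>x. \<bar>u0_of s Phi x\<bar> \<le> M"
    using u0_facts(1)[OF s, of Phi] pf unfolding P_def by blast
  have M0: "M \<ge> 0" using M[of 0] by linarith
  define K where "K = P powr (p - 1) * A * (2 + 2 * M\<^sup>2)"
  have K0: "K \<ge> 0" using A M0 by (simp add: K_def)
  define h where "h x = K * inverse (1 + x\<^sup>2)" for x :: real
  have ih0: "integrable lborel (\<lambda>x::real. inverse (1 + x\<^sup>2))"
    using integrable_inverse_1_plus_square unfolding set_integrable_def einterval_eq_UNIV by simp
  have ih: "integrable lborel h" unfolding h_def by (intro integrable_mult_right ih0)
  define Q where "Q = (\<integral>\<^sup>+ x. ennreal (h x) \<partial>lborel)"
  have Qf: "Q \<noteq> \<infinity>" using integrableD(2)[OF ih] by (simp add: Q_def)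
  show ?thesis
  proof (intro exI[of _ "enn2real Q powr (1/p)"] ballI)
    fix t :: real assume t: "t \<in> {0..1}"
    have pw: "\<bar>Phi (x - t * u0_of s Phi x)\<bar> powr p \<le> h x" for x
    proof -
      define y where "y = x - t * u0_of s Phi x"
      define a where "a = \<bar>Phi y\<bar>"
      have a: "0 \<le> a" "a \<le> P" using pf(2)[of y] by (auto simp: a_def)
      have "a powr p \<le> P powr (p - 1) * a"
      proof (cases "a = 0")
        case True then show ?thesis by simp
      next
        case False
        have "a powr p = a powr ((p - 1) + 1)" by simp
        also have "\<dots> = a powr (p - 1) * a powr 1" by (rule powr_add)
        also have "\<dots> = a powr (p - 1) * a" using a False by simp
        also have "\<dots> \<le> P powr (p - 1) * a" using a p by (intro mult_right_mono powr_mono2) auto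
        finally show ?thesis .
      qed
      also have "\<dots> \<le> P powr (p - 1) * (A / (1 + y\<^sup>2))"
        using A(2)[of y] by (intro mult_left_mono) (auto simp: a_def)
      also have "\<dots> \<le> P powr (p - 1) * (A * (2 + 2 * M\<^sup>2) / (1 + x\<^sup>2))"
      proof (intro mult_left_mono)
        have dxy: "\<bar>x - y\<bar> \<le> M"
        proof -
          have "\<bar>x - y\<bar> = \<bar>t\<bar> * \<bar>u0_of s Phi x\<bar>" by (simp add: y_def abs_mult)
          also have "\<dots> \<le> 1 * M" using t M[of x] by (intro mult_mono) auto
          finally show ?thesis by simp
        qed
        have "(x - y)\<^sup>2 \<le> M\<^sup>2" using dxy M0 by (metis abs_ge_zero power2_abs power_mono)
        moreover have "x\<^sup>2 \<le> 2 * y\<^sup>2 + 2 * (x - y)\<^sup>2"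
        proof -
          have "2 * y\<^sup>2 + 2 * (x - y)\<^sup>2 - x\<^sup>2 = (x - 2 * y)\<^sup>2" by (simp add: power2_eq_square algebra_simps)
          moreover have "0 \<le> (x - 2 * y)\<^sup>2" by simp
          ultimately show ?thesis by linarith
        qed
        moreover have "0 \<le> M\<^sup>2 * y\<^sup>2" by simp
        moreover have "(2 + 2 * M\<^sup>2) * (1 + y\<^sup>2) = 2 + 2 * M\<^sup>2 + 2 * y\<^sup>2 + 2 * (M\<^sup>2 * y\<^sup>2)" by (simp add: algebra_simps)
        ultimately have "1 + x\<^sup>2 \<le> (2 + 2 * M\<^sup>2) * (1 + y\<^sup>2)" by linarith
        then have "1 / (1 + y\<^sup>2) \<le> (2 + 2 * M\<^sup>2) / (1 + x\<^sup>2)"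
          by (simp add: field_simps add_pos_nonneg)
        then have "A * (1 / (1 + y\<^sup>2)) \<le> A * ((2 + 2 * M\<^sup>2) / (1 + x\<^sup>2))"
          using A(1) by (intro mult_left_mono)
        then show "A / (1 + y\<^sup>2) \<le> A * (2 + 2 * M\<^sup>2) / (1 + x\<^sup>2)" by simp
      qed simp
      also have "\<dots> = h x" by (simp add: h_def K_def divide_inverse)
      finally show ?thesis by (simp add: a_def y_def)
    qed
    define I where "I = (\<integral>\<^sup>+ x. ennreal (\<bar>Phi (x - t * u0_of s Phi x)\<bar> powr p) \<partial>lborel)"
    have IQ: "I \<le> Q" unfolding I_def Q_def by (intro nn_integral_mono ennreal_leI pw)
    then have If: "I \<noteq> \<infinity>" using Qf by (auto simp: top_unique)
    have "enn2real I \<le> enn2real Q" using IQ Qf by (intro enn2real_mono) (auto simp: top.not_eq_extremum)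
    then have "enn2real I powr (1/p) \<le> enn2real Q powr (1/p)" using p by (intro powr_mono2) auto
    then show "Lp_norm lborel p (\<lambda>x. phi_of c ph (x - t * u0_of s (phi_of c ph) x)) \<le> ereal (enn2real Q powr (1/p))"
      using If unfolding Lp_norm_def Let_def Phi_def[symmetric] I_def[symmetric] by simp
  qed
qed

lemma lim1: "(\<lambda>n::nat. real n * 2 powr (- real n)) \<longlonglongrightarrow> 0"
  by real_asymp

lemma lim2: "(\<lambda>n::nat. 1 / (2::real) ^ n) \<longlonglongrightarrow> 0"
  by real_asymp

theorem lemma3p4:
  fixes p s c :: real and ph :: "real \<Rightarrow> real"
  assumes "1 \<le> p" and "s > 1 + 1 / p"
    and "admissible_bump ph" and "c > 0"
  shows "\<exists>C::real. \<exists>N::nat. \<forall>n\<ge>N. n \<ge> 1 \<longrightarrow> (\<forall>t\<in>{0..1::real}.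
      Lp_norm lborel p (\<lambda>x. phi_of c ph (x - t * u0_of s (phi_of c ph) x)) \<le> ereal C
    \<and> Lp_norm (restrict_space lborel {0..2 * pi}) p
        (\<lambda>x. cos (11 / 8 * 2 ^ n * (x - (8 / 11 * pi * real n * 2 powr (- real n))
                                      * u0_of s (phi_of c ph) x))) \<ge> 1 / 4)"
proof -
  note adm = assms(3) and c = assms(4) and p = assms(1)
  have s: "s > 1" using assms(2) p by (smt (verit) divide_nonneg_pos)
  obtain C where C: "\<And>t. t \<in> {0..1::real} \<Longrightarrow> Lp_norm lborel p (\<lambda>x. phi_of c ph (x - t * u0_of s (phi_of c ph) x)) \<le> ereal C"
    using part1[OF adm c p s] by blast
  define Phi where "Phi = phi_of c ph"
  define u where "u = u0_of s Phi"
  obtain L where L: "L \<ge> 0" "\<And>x y. \<bar>u x - u y\<bar> \<le> L * \<bar>x - y\<bar>"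
    using u0_facts(2)[OF s, of Phi] phi_facts[OF adm c] unfolding u_def Phi_def by blast
  have cu: "continuous_on UNIV u"
    by (rule lipschitz_on_continuous_on[OF lipschitz_onI[of UNIV u L]]) (use L in \<open>auto simp: dist_real_def\<close>)
  define E where "E n = pi * pi * L * (8 / 11 * pi * (real n * 2 powr (- real n))) + (4 * pi / 11) * (1 / 2 ^ n)" for n :: nat
  have "E \<longlonglongrightarrow> pi * pi * L * (8 / 11 * pi * 0) + (4 * pi / 11) * 0"
    unfolding E_def[abs_def] by (intro tendsto_intros lim1 lim2)
  then have "E \<longlonglongrightarrow> 0" by simp
  then have "eventually (\<lambda>n. E n < pi / 2) sequentially"
    by (rule order_tendstoD(2)) simp
  then obtain N where N: "\<And>n. n \<ge> N \<Longrightarrow> E n < pi / 2" unfolding eventually_sequentially by blast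
  show ?thesis
  proof (intro exI[of _ C] exI[of _ N] allI impI ballI conjI)
    fix n :: nat and t :: real assume n: "n \<ge> N" "n \<ge> 1" and t: "t \<in> {0..1}"
    show "Lp_norm lborel p (\<lambda>x. phi_of c ph (x - t * u0_of s (phi_of c ph) x)) \<le> ereal C" by (rule C[OF t])
    define lam :: real where "lam = 11 / 8 * 2 ^ n"
    define tn where "tn = 8 / 11 * pi * real n * 2 powr (- real n)"
    have lam: "lam > 0" by (simp add: lam_def)
    define psi where "psi x = 2 * (lam * tn) * u x" for x
    define K where "K = 2 * (lam * tn) * L"
    have tn0: "tn \<ge> 0" by (simp add: tn_def)
    have K0: "K \<ge> 0" using L lam tn0 by (simp add: K_def)
    have cpsi: "continuous_on UNIV psi" unfolding psi_def by (intro continuous_intros cu)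
    have lpsi: "\<bar>psi x - psi y\<bar> \<le> K * \<bar>x - y\<bar>" for x y
    proof -
      have "\<bar>psi x - psi y\<bar> = 2 * (lam * tn) * \<bar>u x - u y\<bar>"
        using lam tn0 by (simp add: psi_def abs_mult right_diff_distrib[symmetric])
      also have "\<dots> \<le> 2 * (lam * tn) * (L * \<bar>x - y\<bar>)" using L(2)[of x y] lam tn0 by (intro mult_left_mono) auto
      finally show ?thesis by (simp add: K_def)
    qed
    have ob: "\<bar>integral {0..2*pi} (\<lambda>x. cos (2 * lam * x - psi x))\<bar> \<le> pi * K * (pi / (2 * lam)) + pi / (2 * lam)"
      by (rule osc_bound[OF lam cpsi K0 lpsi])
    have "pi * K * (pi / (2 * lam)) + pi / (2 * lam) = E n"
      using lam by (simp add: K_def E_def tn_def lam_def field_simps)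
    then have ib: "\<bar>integral {0..2*pi} (\<lambda>x. cos (2 * lam * x - psi x))\<bar> \<le> pi / 2"
      using ob N[OF n(1)] by linarith
    define theta where "theta x = lam * (x - tn * u x)" for x
    have ct: "continuous_on UNIV theta" unfolding theta_def by (intro continuous_intros cu)
    have "(\<lambda>x. cos (2 * theta x)) = (\<lambda>x. cos (2 * lam * x - psi x))"
      by (rule ext) (simp add: theta_def psi_def algebra_simps)
    then have "Lp_norm (restrict_space lborel {0..2 * pi}) p (\<lambda>x. cos (theta x)) \<ge> 1/4"
      using lp_lower[OF p ct] ib by simp
    then show "Lp_norm (restrict_space lborel {0..2 * pi}) p
        (\<lambda>x. cos (11 / 8 * 2 ^ n * (x - (8 / 11 * pi * real n * 2 powr (- real n))
                                      * u0_of s (phi_of c ph) x))) \<ge> 1 / 4"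
      by (simp add: theta_def lam_def tn_def u_def Phi_def)
  qed
qed

end
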